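(* Let $\mathcal{G}_{55}$ be the network described in the context, with nodes $(i,j)$, $1\le i,j\le 5$. Define $5\times5$ $0/1$ matrices $M_1=I_5$, $M_2$ with ones exactly at positions $(1,2),(2,3),(3,4),(4,5),(5,1)$, $M_3$ with ones exactly at $(1,3),(2,5),(3,2),(4,1),(5,4)$, $M_4$ with ones exactly at $(1,4),(2,1),(3,5),(4,3),(5,2)$, $M_5$ with ones exactly at $(1,5),(2,4),(3,1),(4,2),(5,3)$. Let $K$ be the 5-coloring of the nodes in which node $(i,j)$ has color $k$ iff $(M_k)_{ij}=1$. Then $K$ is balanced, but $K$ is not an orbit coloring, i.e. there is no subgroup $\Sigma\subseteq\mathbb{S}_5\times\mathbb{S}_5$ whose orbits on the nodes are exactly the color classes of $K$.
   Context: For integers $m,n\ge1$, the network $\mathcal{G}_{mn}$ has node set $\{(i,j):1\le i\le m,\ 1\le j\le n\}$ ($i$ indexes rows, $j$ columns), all nodes of the same type. For each ordered pair of distinct nodes $(c,d)$ there is exactly one arrow with head $c$ and tail $d$, whose type is: "row" if $c,d$ lie in the same row, "column" if they lie in the same column, "diagonal" otherwise; in addition each node has an internal arrow from itself to itself (a fourth type). The group $\mathbb{S}_m\times\mathbb{S}_n$ acts on the nodes by $(\sigma,\tau)\cdot(i,j)=(\sigma(i),\tau(j))$; it is the symmetry group of $\mathcal{G}_{mn}$. A coloring is a map from nodes to a set of colors (identified up to the partition it induces). A coloring is balanced if whenever nodes $c,d$ have the same color, for every arrow type and every color $k$ the number of input arrows of that type to $c$ with tail of color $k$ equals the corresponding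 number for $d$. For a subgroup $\Sigma$ of the symmetry group, the orbit coloring of $\Sigma$ has as color classes the $\Sigma$-orbits on nodes; a coloring is an orbit coloring if it is the orbit coloring of some such subgroup. *)

theory Defs
  imports "HOL-Combinatorics.Permutations"
begin

definition nodes :: "nat \<Rightarrow> nat \<Rightarrow> (nat \<times> nat) set" where
  "nodes m n = {1..m} \<times> {1..n}"

datatype arrow_type = RowArrow | ColArrow | DiagArrow | InternalArrow

text \<open>Type of the unique arrow with head c and tail d (internal arrow if c = d).\<close>
definition arrow_type_of :: "nat \<times> nat \<Rightarrow> nat \<times> nat \<Rightarrow> arrow_type" where
  "arrow_type_of c d =
     (if c = d then InternalArrow
      else if fst c = fst d then RowArrow
      else if snd c = snd d then ColArrow
      else DiagArrow)"

definition balanced :: "nat \<Rightarrow> nat \<Rightarrow> (nat \<times> nat \<Rightarrow> 'k) \<Rightarrow> bool" where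
  "balanced m n col \<longleftrightarrow>
     (\<forall>c\<in>nodes m n. \<forall>d\<in>nodes m n. col c = col d \<longrightarrow>
        (\<forall>t k. card {e \<in> nodes m n. arrow_type_of c e = t \<and> col e = k}
             = card {e \<in> nodes m n. arrow_type_of d e = t \<and> col e = k}))"

definition sym_subgroup :: "nat \<Rightarrow> nat \<Rightarrow> ((nat \<Rightarrow> nat) \<times> (nat \<Rightarrow> nat)) set \<Rightarrow> bool" where
  "sym_subgroup m n S \<longleftrightarrow>
     (id, id) \<in> S \<and>
     (\<forall>g\<in>S. fst g permutes {1..m} \<and> snd g permutes {1..n}) \<and>
     (\<forall>g\<in>S. \<forall>h\<in>S. (fst g \<circ> fst h, snd g \<circ> snd h) \<in> S) \<and>
     (\<forall>g\<in>S. (inv (fst g), inv (snd g)) \<in> S)"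

definition act :: "(nat \<Rightarrow> nat) \<times> (nat \<Rightarrow> nat) \<Rightarrow> nat \<times> nat \<Rightarrow> nat \<times> nat" where
  "act g c = (fst g (fst c), snd g (snd c))"

definition orbit_coloring :: "nat \<Rightarrow> nat \<Rightarrow> (nat \<times> nat \<Rightarrow> 'k) \<Rightarrow> bool" where
  "orbit_coloring m n col \<longleftrightarrow>
     (\<exists>S. sym_subgroup m n S \<and>
        (\<forall>c\<in>nodes m n. \<forall>d\<in>nodes m n. col c = col d \<longleftrightarrow> (\<exists>g\<in>S. act g c = d)))"

definition Mpos :: "nat \<Rightarrow> (nat \<times> nat) set" where
  "Mpos k =
    (if k = 1 then {(1,1),(2,2),(3,3),(4,4),(5,5)}
     else if k = 2 then {(1,2),(2,3),(3,4),(4,5),(5,1)}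
     else if k = 3 then {(1,3),(2,5),(3,2),(4,1),(5,4)}
     else if k = 4 then {(1,4),(2,1),(3,5),(4,3),(5,2)}
     else if k = 5 then {(1,5),(2,4),(3,1),(4,2),(5,3)}
     else {})"

definition K :: "nat \<times> nat \<Rightarrow> nat" where
  "K c = (THE k. k \<in> {1..5} \<and> c \<in> Mpos k)"

end

theory Submission
  imports Defs
begin

definition Kt :: "nat list list" where
  "Kt = [[1,2,3,4,5],[4,1,2,5,3],[5,3,1,2,4],[3,5,4,1,2],[2,4,5,3,1]]"

definition Kf :: "nat \<times> nat \<Rightarrow> nat" where
  "Kf c = Kt ! (fst c - 1) ! (snd c - 1)"

definition nl :: "(nat \<times> nat) list" where
  "nl = [(i,j). i \<leftarrow> [1..<6], j \<leftarrow> [1..<6]]"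

lemma nodes_nl: "nodes 5 5 = set nl"
  unfolding nodes_def nl_def by (force simp: image_iff)

lemma distinct_nl: "distinct nl"
  by code_simp

lemma five: "(i::nat) \<in> {1..5} \<Longrightarrow> i = 1 \<or> i = 2 \<or> i = 3 \<or> i = 4 \<or> i = 5"
  by auto

lemma Mpos_disj: "k \<in> {1..5} \<Longrightarrow> k' \<in> {1..5} \<Longrightarrow> k \<noteq> k' \<Longrightarrow> Mpos k \<inter> Mpos k' = {}"
  apply (drule five, drule five)
  apply (elim disjE)
  apply (simp_all add: Mpos_def)
  done

lemma K_eq: assumes "k \<in> {1..5}" "c \<in> Mpos k" shows "K c = k"
  unfolding K_def
proof (rule the_equality)
  show "k \<in> {1..5} \<and> c \<in> Mpos k" using assms by simp
  fix k' assume "k' \<in> {1..5} \<and> c \<in> Mpos k'"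
  then show "k' = k" using Mpos_disj[of k k'] assms by blast
qed

lemma K_Kf: assumes "c \<in> nodes 5 5" shows "K c = Kf c"
proof -
  have "c \<in> set nl" using assms nodes_nl by simp
  moreover have "nl = [(1,1),(1,2),(1,3),(1,4),(1,5),(2,1),(2,2),(2,3),(2,4),(2,5),
     (3,1),(3,2),(3,3),(3,4),(3,5),(4,1),(4,2),(4,3),(4,4),(4,5),(5,1),(5,2),(5,3),(5,4),(5,5)]"
    by code_simp
  ultimately have "c \<in> set [(1,1),(1,2),(1,3),(1,4),(1,5),(2,1),(2,2),(2,3),(2,4),(2,5),
     (3,1),(3,2),(3,3),(3,4),(3,5),(4,1),(4,2),(4,3),(4,4),(4,5),(5,1),(5,2),(5,3),(5,4),(5,5)]"
    by simp
  then show ?thesis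
    apply simp
    apply (elim disjE)
    apply (simp_all add: Kf_def Kt_def)
    apply (rule K_eq; simp add: Mpos_def)+
    done
qed

lemma Kf_range_all: "list_all (\<lambda>c. Kf c \<in> {1..5}) nl"
  by code_simp

lemma Kf_range: "c \<in> set nl \<Longrightarrow> Kf c \<in> {1..5}"
  using Kf_range_all by (simp add: list_all_iff)

lemma card_filter: "card {e \<in> set nl. P e} = length (filter P nl)"
proof -
  have "{e \<in> set nl. P e} = set (filter P nl)" by auto
  then show ?thesis using distinct_card[of "filter P nl"] distinct_nl by simp
qed

definition F :: "arrow_type \<Rightarrow> nat \<Rightarrow> nat \<Rightarrow> nat" where
  "F t k q = (case t of RowArrow \<Rightarrow> if k = q then 0 else 1
     | ColArrow \<Rightarrow> if k = q then 0 else 1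
     | DiagArrow \<Rightarrow> if k = q then 4 else 3
     | InternalArrow \<Rightarrow> if k = q then 1 else 0)"

definition chk :: "nat \<times> nat \<Rightarrow> bool" where
  "chk c = list_all (\<lambda>t. list_all (\<lambda>k.
     length (filter (\<lambda>e. arrow_type_of c e = t \<and> Kf e = k) nl) = F t k (Kf c))
     [1..<6]) [RowArrow, ColArrow, DiagArrow, InternalArrow]"

lemma chk_all: "list_all chk nl"
  by code_simp

definition G :: "arrow_type \<Rightarrow> nat \<Rightarrow> nat \<Rightarrow> nat" where
  "G t k q = (if k \<in> {1..5} then F t k q else 0)"

lemma count_K:
  assumes c: "c \<in> nodes 5 5"
  shows "card {e \<in> nodes 5 5. arrow_type_of c e = t \<and> K e = k} = G t k (K c)"
proof -
  have "{e \<in> nodes 5 5. arrow_type_of c e = t \<and> K e = k}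
      = {e \<in> set nl. arrow_type_of c e = t \<and> Kf e = k}"
    using K_Kf nodes_nl by auto
  then have eq: "card {e \<in> nodes 5 5. arrow_type_of c e = t \<and> K e = k}
      = length (filter (\<lambda>e. arrow_type_of c e = t \<and> Kf e = k) nl)"
    using card_filter by simp
  have cn: "c \<in> set nl" using c nodes_nl by simp
  show ?thesis
  proof (cases "k \<in> {1..5}")
    case True
    have "chk c" using chk_all cn by (simp add: list_all_iff)
    moreover have "t \<in> set [RowArrow, ColArrow, DiagArrow, InternalArrow]"
      by (cases t) auto
    ultimately have "length (filter (\<lambda>e. arrow_type_of c e = t \<and> Kf e = k) nl) = F t k (Kf c)"
      using True unfolding chk_def list_all_iff by auto
    then show ?thesis using eq True K_Kf[OF c] by (simp add: G_def)
  next
    case False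
    have "filter (\<lambda>e. arrow_type_of c e = t \<and> Kf e = k) nl = []"
      using False Kf_range by (auto simp: filter_empty_conv)
    then show ?thesis using eq False by (auto simp: G_def)
  qed
qed

lemma balanced_K: "balanced 5 5 K"
  unfolding balanced_def using count_K by simp

lemma Kf_row2: "x \<in> {1..5} \<Longrightarrow> Kf (2, x) = 2 \<Longrightarrow> x = 3"
  by (drule five) (auto simp: Kf_def Kt_def)
lemma Kf_row2': "x \<in> {1..5} \<Longrightarrow> Kf (2, x) = 3 \<Longrightarrow> x = 5"
  by (drule five) (auto simp: Kf_def Kt_def)
lemma Kf_col3: "x \<in> {1..5} \<Longrightarrow> Kf (x, 3) = 1 \<Longrightarrow> x = 3"
  by (drule five) (auto simp: Kf_def Kt_def)

lemma not_orbit_K: "\<not> orbit_coloring 5 5 K"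
proof
  assume "orbit_coloring 5 5 K"
  then obtain S where S: "sym_subgroup 5 5 S"
    and orb: "\<forall>c\<in>nodes 5 5. \<forall>d\<in>nodes 5 5. K c = K d \<longleftrightarrow> (\<exists>g\<in>S. act g c = d)"
    unfolding orbit_coloring_def by blast
  have n11: "(1,1) \<in> nodes 5 5" and n22: "(2,2) \<in> nodes 5 5" by (auto simp: nodes_def)
  have "K (1,1) = K (2,2)" using K_Kf[OF n11] K_Kf[OF n22] by (simp add: Kf_def Kt_def)
  then obtain g where g: "g \<in> S" and ag: "act g (1,1) = (2,2)" using orb n11 n22 by blast
  define \<sigma> where "\<sigma> = fst g"
  define \<tau> where "\<tau> = snd g"
  have ps: "\<sigma> permutes {1..5}" and pt: "\<tau> permutes {1..5}"
    using S g unfolding sym_subgroup_def \<sigma>_def \<tau>_def by auto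
  have s1: "\<sigma> 1 = 2" and t1: "\<tau> 1 = 2" using ag by (auto simp: act_def \<sigma>_def \<tau>_def)
  have key: "Kf (\<sigma> i, \<tau> j) = Kf (i, j)" if "i \<in> {1..5}" "j \<in> {1..5}" for i j
  proof -
    have cn: "(i,j) \<in> nodes 5 5" using that by (simp add: nodes_def)
    have si: "\<sigma> i \<in> {1..5}" using permutes_in_image[OF ps, of i] that(1) by (rule iffD2)
    have tj: "\<tau> j \<in> {1..5}" using permutes_in_image[OF pt, of j] that(2) by (rule iffD2)
    have dn: "(\<sigma> i, \<tau> j) \<in> nodes 5 5" using si tj by (simp add: nodes_def)
    have "act g (i,j) = (\<sigma> i, \<tau> j)" by (simp add: act_def \<sigma>_def \<tau>_def)
    then have "\<exists>g\<in>S. act g (i,j) = (\<sigma> i, \<tau> j)" using g by blast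
    then have "K (i,j) = K (\<sigma> i, \<tau> j)" using orb[rule_format, OF cn dn] by simp
    then show ?thesis using K_Kf[OF cn] K_Kf[OF dn] by simp
  qed
  have r: "\<tau> j \<in> {1..5}" if "j \<in> {1..5}" for j using permutes_in_image[OF pt, of j] that by (rule iffD2)
  have rs: "\<sigma> j \<in> {1..5}" if "j \<in> {1..5}" for j using permutes_in_image[OF ps, of j] that by (rule iffD2)
  have k12: "Kf (1,2) = 2" and k22: "Kf (2,2) = 1" and k13: "Kf (1,3) = 3"
    and k23: "Kf (2,3) = 2" and k35: "Kf (3,5) = 4" by (simp_all add: Kf_def Kt_def)
  have "Kf (2, \<tau> 2) = 2" using key[of 1 2] s1 k12 by simp
  then have t2: "\<tau> 2 = 3" using Kf_row2 r[of 2] by simp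
  have "Kf (\<sigma> 2, 3) = 1" using key[of 2 2] t2 k22 by simp
  then have s2: "\<sigma> 2 = 3" using Kf_col3 rs[of 2] by simp
  have "Kf (2, \<tau> 3) = 3" using key[of 1 3] s1 k13 by simp
  then have t3: "\<tau> 3 = 5" using Kf_row2' r[of 3] by simp
  have "Kf (3, 5) = 2" using key[of 2 3] s2 t3 k23 by simp
  then show False using k35 by simp
qed

theorem mainTheorem2:
  shows "balanced 5 5 K \<and> \<not> orbit_coloring 5 5 K"
  using balanced_K not_orbit_K by simp

end
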